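(* For a ring $R$, the following are equivalent: (1) $R$ is a DT ring; (2) $R$ is a semi-tripotent ring; (3) for each $a\in R$ there exist $e\in R$ with $e^2=e$, $v\in R$ with $v^2=1$ and $ev=ve$, and $j\in J(R)$, such that $a=e+v+j$.
   Context: All rings are associative with identity. $J(R)$ is the Jacobson radical, $U(R)$ the group of units. $\Delta(R)=\{x\in R: x+u\in U(R)\text{ for all }u\in U(R)\}$. $\mathrm{Tr}(R)=\{x\in R: x^3=x\}$. A ring $R$ is a DT ring if every $r\in R$ can be written $r=e+d$ with $e\in\mathrm{Tr}(R)$ and $d\in\Delta(R)$. A ring $R$ is semi-tripotent if every $r\in R$ can be written $r=e+j$ with $e\in\mathrm{Tr}(R)$ and $j\in J(R)$. *)

theory Defs
  imports Main
begin

definition units_of_ring :: "'a::ring_1 set" where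
  "units_of_ring = {u. \<exists>w. u * w = 1 \<and> w * u = 1}"

definition left_ideal :: "'a::ring_1 set \<Rightarrow> bool" where
  "left_ideal I \<longleftrightarrow> 0 \<in> I \<and> (\<forall>x\<in>I. \<forall>y\<in>I. x + y \<in> I) \<and> (\<forall>x\<in>I. - x \<in> I)
     \<and> (\<forall>r. \<forall>x\<in>I. r * x \<in> I)"

definition maximal_left_ideal :: "'a::ring_1 set \<Rightarrow> bool" where
  "maximal_left_ideal I \<longleftrightarrow> left_ideal I \<and> I \<noteq> UNIV \<and>
     (\<forall>K. left_ideal K \<and> I \<subseteq> K \<longrightarrow> K = I \<or> K = UNIV)"

definition jacobson :: "'a::ring_1 set" where
  "jacobson = \<Inter> {I. maximal_left_ideal I}"

definition Delta :: "'a::ring_1 set" where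
  "Delta = {x. \<forall>u\<in>units_of_ring. x + u \<in> units_of_ring}"

definition Tr :: "'a::ring_1 set" where
  "Tr = {x. x ^ 3 = x}"

definition DT_ring :: "'a::ring_1 itself \<Rightarrow> bool" where
  "DT_ring _ \<longleftrightarrow> (\<forall>r::'a. \<exists>e\<in>Tr. \<exists>d\<in>Delta. r = e + d)"

definition semi_tripotent :: "'a::ring_1 itself \<Rightarrow> bool" where
  "semi_tripotent _ \<longleftrightarrow> (\<forall>r::'a. \<exists>e\<in>Tr. \<exists>j\<in>jacobson. r = e + j)"

end

theory Submission
  imports Defs
begin
lemma idem_ev:
  fixes x e v :: "'b::ring_1"
  assumes x: "x * x = x" and e: "e * e = e" and v: "v * v = 1" and ev: "e * v = v * e" and xe: "x = e + v"
  shows "e = 1 - x"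
proof -
  have vx: "v = x - e" using xe by simp
  have ex: "e * x = x * e" using xe ev e by (simp add: algebra_simps)
  have "(x - e) * (x - e) = 1" using v vx by simp
  then have h: "x * x - x * e - e * x + e * e = 1" by (simp add: algebra_simps)
  then have h: "x - e * x - e * x + e = 1" using x e ex by simp
  have "e * (x - e * x - e * x + e) = e" using h by simp
  then have "e * x - e * (e * x) - e * (e * x) + e * e = e" by (simp add: algebra_simps)
  then have "e * x - e * x - e * x + e = e" using e by (simp add: mult.assoc[symmetric])
  then have "e * x = 0" by simp
  then show ?thesis using h by (simp add: algebra_simps)
qed
lemma id4:
  fixes y :: "'b::ring_1"
  assumes P1: "\<forall>x::'b. \<exists>e v. e*e = e \<and> v*v = 1 \<and> e*v = v*e \<and> x = e + v"
    and y2: "y + y = 0"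
  shows "y * y * y * y = y * y"
proof -
  obtain e v where ev: "e*e = e" "v*v = 1" "e*v = v*e" "y = e + v" using P1 by blast
  have vy: "v = y - e" using ev by simp
  have ey: "e * y = y * e" using ev by (simp add: algebra_simps)
  have eyy: "e * y + e * y = 0" using y2 by (metis distrib_left mult_zero_right)
  have "(y - e) * (y - e) = 1" using ev(2) vy by simp
  then have "y * y - y * e - e * y + e * e = 1" by (simp add: algebra_simps)
  then have "y * y - (e * y + e * y) + e = 1" using ev(1) ey by (simp add: algebra_simps)
  then have "y * y + e = 1" using eyy by simp
  then have eq: "e = 1 - y * y" by (metis add_diff_cancel_left')
  have yy2: "y * y + y * y = 0" using y2 by (metis distrib_left mult_zero_right)
  have "(1 - y * y) * (1 - y * y) = 1 - y * y" using ev(1) eq by simp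
  then have "1 - (y*y + y*y) + y*y*y*y = 1 - y * y" by (simp add: algebra_simps)
  then have "1 + y*y*y*y = 1 - y * y" using yy2 by simp
  then have "y*y*y*y = - (y*y)" by (metis add_left_cancel diff_conv_add_uminus)
  moreover have "- (y*y) = y * y" using yy2 by (metis add_eq_0_iff)
  ultimately show ?thesis by simp
qed
lemma two_zero_mult: "(a::'b::ring_1) + a = 0 \<Longrightarrow> a * b + a * b = 0"
  by (metis distrib_right mult_zero_left)
lemma two_zero_multl: "(a::'b::ring_1) + a = 0 \<Longrightarrow> b * a + b * a = 0"
  by (metis distrib_left mult_zero_right)

lemma omega:
  fixes n s :: "'b::ring_1"
  assumes P1: "\<forall>x::'b. \<exists>e v. e*e = e \<and> v*v = 1 \<and> e*v = v*e \<and> x = e + v"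
    and nn: "n * n = 0" and n2: "n + n = 0"
  shows "(s * n) * (s * n) = 0"
proof -
  define y where "y = s * n"
  have y2: "y + y = 0" unfolding y_def using two_zero_multl[OF n2] .
  have y4: "y * y * y * y = y * y" using id4[OF P1 y2] .
  define f where "f = y * y"
  define p where "p = y * y * y"
  have ff: "f * f = f" unfolding f_def using y4 by (simp add: mult.assoc)
  have y5: "y * y * y * y * y = y * y * y" using y4 by (metis mult.assoc)
  have fp: "f * p = p" unfolding f_def p_def using y5 by (simp add: mult.assoc)
  have pf: "p * f = p" unfolding f_def p_def using y5 by (simp add: mult.assoc)
  have fn: "f * n = 0" unfolding f_def y_def using nn by (simp add: mult.assoc)
  have psn: "p * s * n = f" unfolding f_def p_def y_def using y4 unfolding y_def by (simp add: mult.assoc)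
  define A where "A = n * f"
  define B where "B = p * s * (1 - f)"
  define g where "g = A * B"
  have AA: "A * A = 0" unfolding A_def using fn by (metis mult.assoc mult_zero_left mult_zero_right)
  have fA: "f * A = 0" unfolding A_def using fn by (simp add: mult.assoc[symmetric])
  have Af: "A * f = A" unfolding A_def using ff by (simp add: mult.assoc)
  have fB: "f * B = B" unfolding B_def using fp by (simp add: mult.assoc[symmetric])
  have Bf: "B * f = 0" unfolding B_def using ff by (simp add: algebra_simps)
  have BA: "B * A = f"
  proof -
    have "B * A = p * s * n * f - p * s * (f * n) * f" unfolding B_def A_def by (simp add: algebra_simps)
    also have "\<dots> = f" using psn fn ff by simp
    finally show ?thesis .
  qed
  have BB: "B * B = 0" using fB Bf by (metis mult.assoc mult_zero_left)
  have gA: "g * A = A" unfolding g_def using BA Af by (simp add: mult.assoc)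
  have gB: "g * B = 0" unfolding g_def using BB by (simp add: mult.assoc)
  have gf: "g * f = 0" unfolding g_def using Bf by (simp add: mult.assoc)
  have fg: "f * g = 0" unfolding g_def using fA by (simp add: mult.assoc[symmetric])
  have AB: "A * B = g" unfolding g_def ..
  have f2: "f + f = 0" unfolding f_def using two_zero_mult[OF y2] .
  have p2: "p + p = 0" unfolding p_def using two_zero_mult[OF two_zero_mult[OF y2]] .
  have A2: "A + A = 0" unfolding A_def using two_zero_mult[OF n2] .
  have B2: "B + B = 0" unfolding B_def using two_zero_mult[OF two_zero_mult[OF p2]] .
  define w where "w = A + B + f"
  have w2: "w + w = 0" unfolding w_def using f2 A2 B2
    by (metis (no_types, lifting) add.assoc add.commute add_0_right)
  have ww: "w * w = g + A + B"
  proof -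
    have "w * w = A*A + A*B + A*f + B*A + B*B + B*f + f*A + f*B + f*f"
      unfolding w_def by (simp add: distrib_left distrib_right add.assoc)
    also have "\<dots> = g + A + B + (f + f)" using AA AB Af BA BB Bf fA fB ff by (simp add: algebra_simps)
    finally show ?thesis using f2 by simp
  qed
  have www: "w * w * w = g + f"
  proof -
    have "w * w * w = g*A + g*B + g*f + A*A + A*B + A*f + B*A + B*B + B*f"
      unfolding ww unfolding w_def by (simp add: distrib_left distrib_right add.assoc)
    also have "\<dots> = g + f + (A + A)" using AA AB Af BA BB Bf gA gB gf by (simp add: algebra_simps)
    finally show ?thesis using A2 by simp
  qed
  have wwww: "w * w * w * w = w"
  proof -
    have "w * w * w * w = g*A + g*B + g*f + f*A + f*B + f*f"
      unfolding www unfolding w_def by (simp add: distrib_left distrib_right add.assoc)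
    also have "\<dots> = w" unfolding w_def using gA gB gf fA fB ff by (simp add: algebra_simps)
    finally show ?thesis .
  qed
  have "w = g + A + B" using id4[OF P1 w2] wwww ww by simp
  then have "f = g" unfolding w_def by (simp add: algebra_simps)
  then have "f = 0" using ff fg by simp
  then show ?thesis unfolding f_def y_def .
qed

lemma num_comm: "x * numeral k = numeral k * (x::'b::ring_1)"
  by (metis of_nat_numeral mult_of_nat_commute)

lemma three_sum: "3 * t = t + t + (t::'b::ring_1)"
proof -
  have "(3::'b) = 1 + 1 + 1" by simp
  then show ?thesis by (metis distrib_right mult_1_left)
qed
lemma nn: "numeral a * x * (numeral b * y) = numeral (a * b) * (x * (y::'b::ring_1))"
proof -
  have "numeral a * x * (numeral b * y) = numeral a * (x * numeral b) * y" by (simp add: mult.assoc)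
  also have "\<dots> = (numeral a * numeral b) * (x * y)" by (simp add: num_comm[of x] mult.assoc)
  finally show ?thesis by simp
qed
lemma nmul: "numeral a * (numeral b * y) = numeral (a * b) * (y::'b::ring_1)"
  by (simp add: mult.assoc[symmetric])

lemma nsum1: "numeral a * x + numeral b * x = numeral (a + b) * (x::'b::ring_1)"
  by (simp only: distrib_right[symmetric] numeral_plus_numeral)
lemma nsum2: "numeral a * x + (numeral b * x + y) = numeral (a + b) * x + (y::'b::ring_1)"
  by (simp add: add.assoc[symmetric] nsum1)
lemmas nsum = nsum1 nsum2

lemma six_zero:
  fixes dummy :: "'b::ring_1"
  assumes P1: "\<forall>x::'b. \<exists>e v. e*e = e \<and> v*v = 1 \<and> e*v = v*e \<and> x = e + v"
    and R2: "\<forall>w::'b. w + w = 0 \<longrightarrow> w * w = 0 \<longrightarrow> w = 0"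
  shows "(6::'b) = 0"
proof -
  obtain e v :: 'b where ev: "e*e = e" "v*v = 1" "e*v = v*e" "3 = e + v" using P1 by blast
  have vx: "v = 3 - e" using ev by (simp add: algebra_simps)
  have "(3 - e) * (3 - e) = 1" using ev(2) vx by simp
  then have "9 - 6 * e + e = 1" using ev(1) by (simp add: algebra_simps nsum num_comm[of e])
  moreover have "(6::'b) * e = 5 * e + e"
  proof -
    have "(6::'b) * e = (5 + 1) * e" by simp
    also have "\<dots> = 5 * e + e" by (simp only: distrib_right mult_1_left)
    finally show ?thesis .
  qed
  ultimately have "9 - (5 * e + e) + e = 1" by simp
  then have "9 = 1 + 5 * e" by (simp add: algebra_simps)
  moreover have "(9::'b) = 1 + 8" by simp
  ultimately have h1: "8 = 5 * e" by (metis add_left_cancel)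
  have "8 * e = 5 * e" using arg_cong[OF h1, of "\<lambda>z. z * e"] ev(1) by (simp add: mult.assoc)
  then have "3 * e + 5 * e = 0 + 5 * e" by (simp add: distrib_right[symmetric])
  then have h2: "3 * e = 0" by simp
  have "8 = 2 * e + 3 * e" using h1 by (simp add: distrib_right[symmetric])
  then have h3: "8 = 2 * e" using h2 by simp
  have "(24::'b) = 3 * 8" by simp
  also have "\<dots> = 3 * (2 * e)" using h3 by metis
  also have "\<dots> = 2 * (3 * e)" by (simp add: nmul)
  finally have h4: "(24::'b) = 0" using h2 by simp
  have "(12::'b) + 12 = 0" using h4 by simp
  moreover have "(12::'b) * 12 = 0"
  proof -
    have "(12::'b) * 12 = 6 * 24" by simp
    then show ?thesis using h4 by simp
  qed
  ultimately have h12: "(12::'b) = 0" using R2 by blast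
  have "(6::'b) + 6 = 0" using h12 by simp
  moreover have "(6::'b) * 6 = 0"
  proof -
    have "(6::'b) * 6 = 3 * 12" by simp
    then show ?thesis using h12 by simp
  qed
  ultimately show ?thesis using R2 by blast
qed


lemma cube:
  fixes x :: "'b::ring_1"
  assumes P1: "\<forall>x::'b. \<exists>e v. e*e = e \<and> v*v = 1 \<and> e*v = v*e \<and> x = e + v"
    and R2: "\<forall>w::'b. w + w = 0 \<longrightarrow> w * w = 0 \<longrightarrow> w = 0"
  shows "x * x * x = x"
proof -
  have six: "(6::'b) = 0" using six_zero[OF P1 R2] .
  obtain e v :: 'b where ev: "e*e = e" "v*v = 1" "e*v = v*e" "x = e + v" using P1 by blast
  have ee: "e * (e * t) = e * t" for t using ev(1) by (metis mult.assoc)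
  have vv: "v * (v * t) = t" for t using ev(2) by (metis mult.assoc mult_1_left)
  have ev': "v * (e * t) = e * (v * t)" for t using ev(3) by (metis mult.assoc)
  have ve: "v * e = e * v" using ev(3) by simp
  define u where "u = e + e * v"
  define z where "z = 3 * u"
  have "z + z = 6 * u" unfolding z_def by (simp add: nsum)
  then have z2: "z + z = 0" using six by simp
  have uu: "u * u = 2 * u" unfolding u_def mult_2
    by (simp add: algebra_simps ev(1,2) ee vv ev' ve)
  have "z * z = 9 * (u * u)" unfolding z_def by (simp add: nn)
  also have "\<dots> = 3 * (6 * u)" unfolding uu by (simp add: nmul)
  finally have "z * z = 0" using six by simp
  then have z0: "z = 0" using R2 z2 by blast
  have "x * x * x = x + (u + u + u)" unfolding u_def ev(4)
    by (simp add: algebra_simps ev(1,2) ee vv ev' ve)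
  also have "\<dots> = x + z" unfolding z_def three_sum ..
  finally show ?thesis using z0 by simp
qed

lemma three_sq:
  fixes x :: "'b::ring_1"
  assumes P1: "\<forall>x::'b. \<exists>e v. e*e = e \<and> v*v = 1 \<and> e*v = v*e \<and> x = e + v"
    and R2: "\<forall>w::'b. w + w = 0 \<longrightarrow> w * w = 0 \<longrightarrow> w = 0"
  shows "3 * (x * x + x) = 0"
proof -
  have six: "(6::'b) = 0" using six_zero[OF P1 R2] .
  have c: "x * x * x = x" using cube[OF P1 R2] .
  have c': "x * (x * x) = x" "x * (x * (x * x)) = x * x" using c by (simp_all add: mult.assoc)
  define u where "u = x * x + x"
  define w where "w = 3 * u"
  have "w + w = 6 * u" unfolding w_def by (simp add: nsum)
  then have w2: "w + w = 0" using six by simp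
  have uu: "u * u = 2 * u" unfolding u_def mult_2
    by (simp add: algebra_simps c')
  have "w * w = 9 * (u * u)" unfolding w_def by (simp add: nn)
  also have "\<dots> = 3 * (6 * u)" unfolding uu by (simp add: nmul)
  finally have "w * w = 0" using six by simp
  then show ?thesis using R2 w2 unfolding w_def u_def by blast
qed


definition phi :: "'b::ring_1 \<Rightarrow> int \<Rightarrow> int \<Rightarrow> 'b" where
  "phi a i j = of_int i * a + of_int j * (a * a)"

lemma oi_mult: "of_int i * x * (of_int l * y) = of_int (i * l) * (x * (y::'b::ring_1))"
  by (metis mult.assoc mult_of_int_commute of_int_mult)

lemma phi_mult:
  assumes c: "a * a * a = (a::'b::ring_1)"
  shows "phi a i j * phi a k l = phi a (i * l + j * k) (i * k + j * l)"
proof -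
  have c1: "a * (a * a) = a" and c2: "a * a * (a * a) = a * a" using c by (simp_all add: mult.assoc[symmetric])
  have "phi a i j * phi a k l = of_int (i * k) * (a * a) + of_int (i * l) * (a * (a * a))
      + of_int (j * k) * (a * a * a) + of_int (j * l) * (a * a * (a * a))"
    unfolding phi_def by (simp add: distrib_left distrib_right oi_mult add.assoc)
  also have "\<dots> = phi a (i * l + j * k) (i * k + j * l)"
    unfolding phi_def c1 c2 c by (simp add: algebra_simps)
  finally show ?thesis .
qed

lemma phi_diff: "phi a i j - phi a k l = phi a (i - k) (j - l)"
  unfolding phi_def by (simp add: algebra_simps)

lemma phi_zero:
  assumes six: "(6::'b::ring_1) = 0" and t: "3 * (a * a + a) = (0::'b)"
  shows "phi a (6 * i + 3 * k) (6 * j + 3 * k) = 0"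
proof -
  have e1: "(of_int (6 * i + 3 * k) :: 'b) = 6 * of_int i + 3 * of_int k" for i by simp
  have ck: "(3::'b) * of_int k = of_int k * 3" by (rule mult_of_int_commute[symmetric])
  have "phi a (6 * i + 3 * k) (6 * j + 3 * k) = 3 * of_int k * a + 3 * of_int k * (a * a)"
    unfolding phi_def e1 using six by (simp add: distrib_right)
  also have "\<dots> = of_int k * (3 * (a * a + a))" unfolding ck
    by (simp add: mult.assoc distrib_left add.commute)
  also have "\<dots> = 0" using t by simp
  finally show ?thesis .
qed

lemma final_alg:
  fixes a :: "'b::ring_1"
  assumes six: "(6::'b) = 0" and c: "a * a * a = a" and t: "3 * (a * a + a) = 0"
  defines "p \<equiv> 2 * a + 5 * (a * a)" and "q \<equiv> a + 5 * (a * a)"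
  shows "p * p = p" "q * q = q" "p * q = 0" "q * p = 0" "p - q = a"
proof -
  have P: "p = phi a 2 5" unfolding p_def phi_def by simp
  have Q: "q = phi a 1 5" unfolding q_def phi_def by simp
  have z: "phi a (6 * i + 3 * k) (6 * j + 3 * k) = 0" for i j k using phi_zero[OF six t] .
  have "p * p - p = phi a 18 24" unfolding P phi_mult[OF c] phi_diff by simp
  moreover have "phi a 18 24 = 0" using z[of 3 0 4] by simp
  ultimately show "p * p = p" by simp
  have "q * q - q = phi a 9 21" unfolding Q phi_mult[OF c] phi_diff by simp
  moreover have "phi a 9 21 = 0" using z[of 1 1 3] by simp
  ultimately show "q * q = q" by simp
  have "p * q = phi a 15 27" unfolding P Q phi_mult[OF c] by simp
  moreover have "phi a 15 27 = 0" using z[of 2 1 4] by simp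
  ultimately show "p * q = 0" by simp
  have "q * p = phi a 15 27" unfolding P Q phi_mult[OF c] by simp
  moreover have "phi a 15 27 = 0" using z[of 2 1 4] by simp
  ultimately show "q * p = 0" by simp
  show "p - q = a" unfolding p_def q_def by (simp add: mult_2)
qed

definition unit :: "'a::ring_1 \<Rightarrow> bool" where
  "unit u \<longleftrightarrow> (\<exists>w. u * w = 1 \<and> w * u = 1)"

lemma units_of_ring_iff: "u \<in> units_of_ring \<longleftrightarrow> unit u"
  by (simp add: units_of_ring_def unit_def)

lemma unit_mult: "unit a \<Longrightarrow> unit b \<Longrightarrow> unit (a * b)"
  unfolding unit_def
proof -
  assume "\<exists>w. a * w = 1 \<and> w * a = 1" "\<exists>w. b * w = 1 \<and> w * b = 1"
  then obtain wa wb where "a * wa = 1" "wa * a = 1" "b * wb = 1" "wb * b = 1" by blast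
  then have "(a*b) * (wb*wa) = 1" "(wb*wa)*(a*b) = 1"
    by (metis mult.assoc mult_1_left)+
  then show "\<exists>w. a * b * w = 1 \<and> w * (a * b) = 1" by blast
qed

lemma unit_one: "unit 1" by (auto simp: unit_def)

lemma unit_uminus: "unit a \<Longrightarrow> unit (- a)"
  unfolding unit_def by (metis minus_mult_minus)

lemma left_ideal_J: "left_ideal (jacobson::'a::ring_1 set)"
  unfolding left_ideal_def jacobson_def maximal_left_ideal_def by auto

lemma J_add: "x \<in> jacobson \<Longrightarrow> y \<in> jacobson \<Longrightarrow> x + y \<in> jacobson"
  using left_ideal_J unfolding left_ideal_def by blast
lemma J_uminus: "x \<in> jacobson \<Longrightarrow> - x \<in> jacobson"
  using left_ideal_J unfolding left_ideal_def by blast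
lemma J_zero: "0 \<in> jacobson"
  using left_ideal_J unfolding left_ideal_def by blast
lemma J_lmult: "x \<in> jacobson \<Longrightarrow> r * x \<in> jacobson"
  using left_ideal_J unfolding left_ideal_def by blast
lemma J_diff: "x \<in> jacobson \<Longrightarrow> y \<in> jacobson \<Longrightarrow> x - y \<in> jacobson"
  using J_add[of x "-y"] J_uminus by auto

lemma left_ideal_one: "left_ideal K \<Longrightarrow> 1 \<in> K \<Longrightarrow> K = UNIV"
  unfolding left_ideal_def by (metis UNIV_eq_I mult.right_neutral)

lemma exists_maximal:
  assumes I: "left_ideal (I::'a::ring_1 set)" and one: "1 \<notin> I"
  shows "\<exists>M. maximal_left_ideal M \<and> I \<subseteq> M"
proof -
  define A where "A = {K. left_ideal K \<and> 1 \<notin> K \<and> I \<subseteq> K}"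
  have "\<forall>C\<in>chains A. \<exists>U\<in>A. \<forall>X\<in>C. X \<subseteq> U"
  proof
    fix C assume C: "C \<in> chains A"
    show "\<exists>U\<in>A. \<forall>X\<in>C. X \<subseteq> U"
    proof (cases "C = {}")
      case True then show ?thesis using I one by (auto simp: A_def)
    next
      case False
      have CA: "C \<subseteq> A" using chainsD2[OF C] .
      have "\<Union>C \<in> A"
        unfolding A_def mem_Collect_eq
      proof (intro conjI)
        show "left_ideal (\<Union>C)"
          unfolding left_ideal_def
        proof (intro conjI ballI allI)
          obtain K where "K \<in> C" using False by blast
          then show "0 \<in> \<Union>C" using CA by (auto simp: A_def left_ideal_def)
        next
          fix x y assume "x \<in> \<Union>C" "y \<in> \<Union>C"
          then obtain K1 K2 where K: "K1 \<in> C" "K2 \<in> C" "x \<in> K1" "y \<in> K2" by blast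
          from chainsD[OF C K(1,2)] show "x + y \<in> \<Union>C"
          proof
            assume "K1 \<subseteq> K2"
            moreover have "left_ideal K2" using K CA by (auto simp: A_def)
            ultimately have "x + y \<in> K2" using K unfolding left_ideal_def by blast
            then show ?thesis using K by blast
          next
            assume "K2 \<subseteq> K1"
            moreover have "left_ideal K1" using K CA by (auto simp: A_def)
            ultimately have "x + y \<in> K1" using K unfolding left_ideal_def by blast
            then show ?thesis using K by blast
          qed
        next
          fix x assume "x \<in> \<Union>C"
          then obtain K where K: "K \<in> C" "x \<in> K" by blast
          then have "left_ideal K" using CA by (auto simp: A_def)
          then have "- x \<in> K" using K unfolding left_ideal_def by blast
          then show "- x \<in> \<Union>C" using K by blast
        next
          fix r x assume "x \<in> \<Union>C"
          then obtain K where K: "K \<in> C" "x \<in> K" by blast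
          then have "left_ideal K" using CA by (auto simp: A_def)
          then have "r * x \<in> K" using K unfolding left_ideal_def by blast
          then show "r * x \<in> \<Union>C" using K by blast
        qed
        show "1 \<notin> \<Union>C" using CA by (auto simp: A_def)
        show "I \<subseteq> \<Union>C" using CA False by (auto simp: A_def)
      qed
      then show ?thesis by blast
    qed
  qed
  from Zorn_Lemma2[OF this] obtain M where M: "M \<in> A" "\<forall>X\<in>A. M \<subseteq> X \<longrightarrow> X = M" by blast
  have "maximal_left_ideal M"
    unfolding maximal_left_ideal_def
  proof (intro conjI allI impI)
    show "left_ideal M" using M by (auto simp: A_def)
    show "M \<noteq> UNIV" using M by (auto simp: A_def)
    fix K assume K: "left_ideal K \<and> M \<subseteq> K"
    show "K = M \<or> K = UNIV"
    proof (cases "1 \<in> K")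
      case True then show ?thesis using left_ideal_one K by blast
    next
      case False then have "K \<in> A" using K M by (auto simp: A_def)
      then show ?thesis using M K by blast
    qed
  qed
  then show ?thesis using M by (auto simp: A_def)
qed

lemma J_left_inv:
  assumes j: "(j::'a::ring_1) \<in> jacobson"
  shows "\<exists>y. y * (1 + j) = 1"
proof (rule ccontr)
  assume no: "\<not> ?thesis"
  define I where "I = {r * (1 + j) | r. True}"
  have I: "left_ideal I"
    unfolding left_ideal_def I_def
  proof (intro conjI ballI allI)
    show "0 \<in> {r * (1 + j) |r. True}" by (auto intro: exI[of _ 0])
  next
    fix x y assume "x \<in> {r * (1 + j) |r. True}" "y \<in> {r * (1 + j) |r. True}"
    then obtain a b where "x = a * (1+j)" "y = b * (1+j)" by blast
    then have "x + y = (a + b) * (1 + j)" by (simp add: distrib_right)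
    then show "x + y \<in> {r * (1 + j) |r. True}" by blast
  next
    fix x assume "x \<in> {r * (1 + j) |r. True}"
    then obtain a where "x = a * (1+j)" by blast
    then have "- x = (- a) * (1 + j)" by simp
    then show "- x \<in> {r * (1 + j) |r. True}" by blast
  next
    fix r x assume "x \<in> {r * (1 + j) |r. True}"
    then obtain a where "x = a * (1+j)" by blast
    then have "r * x = (r * a) * (1 + j)" by (simp add: mult.assoc)
    then show "r * x \<in> {r * (1 + j) |r. True}" by blast
  qed
  have "1 \<notin> I" using no by (auto simp: I_def)
  from exists_maximal[OF I this] obtain M where M: "maximal_left_ideal M" "I \<subseteq> M" by blast
  have "j \<in> M" using j M(1) by (auto simp: jacobson_def)
  moreover have "1 + j \<in> M" using M(2) by (auto simp: I_def intro: exI[of _ 1])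
  ultimately have "1 \<in> M" using M(1) unfolding maximal_left_ideal_def left_ideal_def
    by (metis add_diff_cancel diff_conv_add_uminus)
  then show False using M(1) left_ideal_one unfolding maximal_left_ideal_def by blast
qed

lemma J_unit:
  assumes j: "(j::'a::ring_1) \<in> jacobson"
  shows "unit (1 + j)"
proof -
  obtain y where y: "y * (1 + j) = 1" using J_left_inv[OF j] by blast
  have "y = 1 + (- (y * j))" using y proof -
    have "y + y * j = 1" using y by (simp add: distrib_left)
    then show ?thesis by (metis add_diff_cancel_right' diff_conv_add_uminus)
  qed
  moreover have "- (y * j) \<in> jacobson" using J_uminus J_lmult j by blast
  ultimately obtain z where z: "z * y = 1" using J_left_inv by metis
  have "z = z * (y * (1 + j))" using y by simp
  also have "\<dots> = 1 + j" using z by (simp add: mult.assoc[symmetric])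
  finally have "(1 + j) * y = 1" using z by simp
  then show ?thesis using y unfolding unit_def by blast
qed


lemma in_J_if:
  assumes H: "\<And>r. \<exists>y. y * (1 + r * (z::'a::ring_1)) = 1"
  shows "z \<in> jacobson"
  unfolding jacobson_def
proof (rule InterI)
  fix M assume "M \<in> {I. maximal_left_ideal (I::'a set)}"
  then have M: "maximal_left_ideal M" by simp
  then have LM: "left_ideal M" and NU: "M \<noteq> UNIV" and mx: "\<And>K. left_ideal K \<Longrightarrow> M \<subseteq> K \<Longrightarrow> K = M \<or> K = UNIV"
    unfolding maximal_left_ideal_def by blast+
  show "z \<in> M"
  proof (rule ccontr)
    assume zM: "z \<notin> M"
    define K where "K = {m + r * z | m r. m \<in> M}"
    have "left_ideal K"
      unfolding left_ideal_def K_def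
    proof (intro conjI ballI allI)
      show "0 \<in> {m + r * z |m r. m \<in> M}" using LM unfolding left_ideal_def by (auto intro!: exI[of _ 0])
    next
      fix x y assume "x \<in> {m + r * z |m r. m \<in> M}" "y \<in> {m + r * z |m r. m \<in> M}"
      then obtain m1 r1 m2 r2 where "x = m1 + r1 * z" "y = m2 + r2 * z" "m1 \<in> M" "m2 \<in> M" by blast
      moreover then have "m1 + m2 \<in> M" using LM unfolding left_ideal_def by blast
      moreover have "x + y = (m1 + m2) + (r1 + r2) * z" using calculation by (simp add: algebra_simps)
      ultimately show "x + y \<in> {m + r * z |m r. m \<in> M}" by blast
    next
      fix x assume "x \<in> {m + r * z |m r. m \<in> M}"
      then obtain m1 r1 where "x = m1 + r1 * z" "m1 \<in> M" by blast
      moreover then have "- m1 \<in> M" using LM unfolding left_ideal_def by blast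
      moreover have "- x = (- m1) + (- r1) * z" using calculation by (simp add: algebra_simps)
      ultimately show "- x \<in> {m + r * z |m r. m \<in> M}" by blast
    next
      fix s x assume "x \<in> {m + r * z |m r. m \<in> M}"
      then obtain m1 r1 where "x = m1 + r1 * z" "m1 \<in> M" by blast
      moreover then have "s * m1 \<in> M" using LM unfolding left_ideal_def by blast
      moreover have "s * x = (s * m1) + (s * r1) * z" using calculation by (simp add: algebra_simps)
      ultimately show "s * x \<in> {m + r * z |m r. m \<in> M}" by blast
    qed
    moreover have "M \<subseteq> K"
    proof
      fix m assume "m \<in> M"
      moreover have "m = m + 0 * z" by simp
      ultimately show "m \<in> K" unfolding K_def by blast
    qed
    moreover have "z \<in> K"
    proof -
      have "0 \<in> M" using LM unfolding left_ideal_def by blast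
      moreover have "z = 0 + 1 * z" by simp
      ultimately show ?thesis unfolding K_def by blast
    qed
    ultimately have "K = UNIV" using mx zM by blast
    then obtain m r where mr: "1 = m + r * z" "m \<in> M" unfolding K_def by blast
    then have "m = 1 + (- r) * z" by (simp add: algebra_simps)
    moreover obtain y where "y * (1 + (- r) * z) = 1" using H by blast
    ultimately have "y * m = 1" by simp
    moreover have "y * m \<in> M" using LM mr unfolding left_ideal_def by blast
    ultimately have "1 \<in> M" by simp
    then show False using left_ideal_one[OF LM] NU by blast
  qed
qed

lemma J_rmult:
  assumes x: "(x::'a::ring_1) \<in> jacobson" shows "x * s \<in> jacobson"
proof (rule in_J_if)
  fix r
  have "s * (r * x) \<in> jacobson" using x J_lmult by blast
  then obtain c where c: "c * (1 + s * r * x) = 1" using J_unit unfolding unit_def by (metis mult.assoc)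
  have "(1 - r * x * c * s) * (1 + r * (x * s)) = 1 + r * x * s - r * x * (c * (1 + s * r * x)) * s"
    by (simp add: algebra_simps)
  also have "\<dots> = 1" using c by (simp add: mult.assoc)
  finally show "\<exists>y. y * (1 + r * (x * s)) = 1" by blast
qed

lemma J_mult_r: "(x::'a::ring_1) \<in> jacobson \<Longrightarrow> s * x * t \<in> jacobson"
  using J_lmult J_rmult by blast

lemma Delta_iff: "d \<in> Delta \<longleftrightarrow> (\<forall>u. unit u \<longrightarrow> unit (d + u))"
  by (auto simp: Delta_def units_of_ring_iff)

lemma Delta_unit1: "d \<in> Delta \<Longrightarrow> unit (1 + d)"
  using unit_one by (auto simp: Delta_iff add.commute)

lemma Delta_add: "x \<in> Delta \<Longrightarrow> y \<in> Delta \<Longrightarrow> x + y \<in> Delta"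
  by (auto simp: Delta_iff add.assoc)

lemma Delta_uminus: "x \<in> Delta \<Longrightarrow> - x \<in> Delta"
proof -
  assume x: "x \<in> Delta"
  show ?thesis unfolding Delta_iff
  proof (intro allI impI)
    fix u :: 'a assume "unit u"
    then have "unit (x + - u)" using x unit_uminus Delta_iff by blast
    then have "unit (- (x + - u))" by (rule unit_uminus)
    then show "unit (- x + u)" by simp
  qed
qed

lemma Delta_lunit: "d \<in> Delta \<Longrightarrow> unit u \<Longrightarrow> u * d \<in> Delta"
proof -
  assume d: "d \<in> Delta" and u: "unit u"
  then obtain w where w: "u * w = 1" "w * u = 1" unfolding unit_def by blast
  show ?thesis unfolding Delta_iff
  proof (intro allI impI)
    fix v :: 'a assume v: "unit v"
    have "unit w" using w unit_def by blast
    then have "unit (w * v)" using v unit_mult by blast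
    then have "unit (d + w * v)" using d Delta_iff by blast
    then have "unit (u * (d + w * v))" using u unit_mult by blast
    moreover have "u * (d + w * v) = u * d + v" using w by (simp add: distrib_left mult.assoc[symmetric])
    ultimately show "unit (u * d + v)" by simp
  qed
qed

lemma Delta_mult: "x \<in> Delta \<Longrightarrow> d \<in> Delta \<Longrightarrow> x * d \<in> Delta"
proof -
  assume x: "x \<in> Delta" and d: "d \<in> Delta"
  have "(1 + x) * d \<in> Delta" using Delta_lunit[OF d Delta_unit1[OF x]] .
  then have "(1 + x) * d + - d \<in> Delta" using Delta_add Delta_uminus d by blast
  then show ?thesis by (simp add: algebra_simps)
qed

lemma J_sub_Delta: "(j::'a::ring_1) \<in> jacobson \<Longrightarrow> j \<in> Delta"
  unfolding Delta_iff
proof (intro allI impI)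
  fix u :: 'a assume j: "j \<in> jacobson" and u: "unit u"
  then obtain w where w: "u * w = 1" "w * u = 1" unfolding unit_def by blast
  have "unit (1 + w * j)" using J_unit J_lmult j by blast
  then have "unit (u * (1 + w * j))" using u unit_mult by blast
  moreover have "u * (1 + w * j) = j + u" using w by (simp add: distrib_left mult.assoc[symmetric])
  ultimately show "unit (j + u)" by simp
qed


lemma unit_inv: "unit u \<Longrightarrow> \<exists>w. u * w = 1 \<and> w * u = 1" by (simp add: unit_def)

lemma idem_Delta_unit:
  assumes g: "g * g = (g::'a::ring_1)" and d: "d \<in> Delta"
  shows "unit (1 + g * d)"
proof -
  have gg: "g * (g * x) = g * x" for x using g by (simp add: mult.assoc[symmetric])
  define A where "A = g + g * d * g"
  define X where "X = g + g - 1 - (1 - g) * d * g"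
  have "X * X = 1" unfolding X_def by (simp add: algebra_simps g gg)
  then have "unit X" unfolding unit_def by blast
  then have "unit (d + X)" using d Delta_iff by blast
  then obtain N where N: "N * (d + X) = 1" unfolding unit_def by blast
  have Mg: "(d + X) * g = A" unfolding X_def A_def by (simp add: algebra_simps g gg)
  define L where "L = g * N * g"
  have LA: "L * A = g"
  proof -
    have gA: "g * A = A" unfolding A_def by (simp add: algebra_simps g gg)
    have "L * A = g * (N * (g * A))" unfolding L_def by (simp add: mult.assoc)
    also have "\<dots> = g * (N * ((d + X) * g))" using gA Mg by simp
    also have "\<dots> = g" using N g by (simp add: mult.assoc[symmetric])
    finally show ?thesis .
  qed
  define X' where "X' = g + g - 1 - g * d * (1 - g)"
  have "X' * X' = 1" unfolding X'_def by (simp add: algebra_simps g gg)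
  then have "unit X'" unfolding unit_def by blast
  then have "unit (d + X')" using d Delta_iff by blast
  then obtain N' where N': "(d + X') * N' = 1" unfolding unit_def by blast
  have gM: "g * (d + X') = A" unfolding X'_def A_def by (simp add: algebra_simps g gg)
  define R where "R = g * N' * g"
  have AR: "A * R = g"
  proof -
    have Ag: "A * g = A" unfolding A_def by (simp add: algebra_simps g gg mult.assoc)
    have "A * R = ((A * g) * N') * g" unfolding R_def by (simp add: mult.assoc)
    also have "\<dots> = ((g * (d + X')) * N') * g" using Ag gM by simp
    also have "\<dots> = g" using N' g by (simp add: mult.assoc)
    finally show ?thesis .
  qed
  have Lg: "L * g = L" and gL: "g * L = L" unfolding L_def using g by (simp_all add: mult.assoc gg)
  have Lg': "L * (g * x) = L * x" for x using Lg by (metis mult.assoc)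
  have gL': "g * (L * x) = L * x" for x using gL by (metis mult.assoc)
  have gR: "g * R = R" unfolding R_def using g by (simp add: mult.assoc gg)
  have "L = L * (A * R)" using AR gR Lg by (metis mult.assoc)
  also have "\<dots> = R" using LA gR by (simp add: mult.assoc[symmetric])
  finally have LR: "L = R" .
  have AL: "A * L = g" using AR LR by simp
  have r1: "L * (d * g) = g - L" using LA Lg unfolding A_def by (simp add: algebra_simps Lg')
  have r1': "L * (d * (g * x)) = g * x - L * x" for x
    using arg_cong[OF r1, of "\<lambda>z. z * x"] by (simp add: algebra_simps)
  have r2: "g * (d * L) = g - L" using AL gL unfolding A_def by (simp add: algebra_simps gg gL')
  have r2': "g * (d * (L * x)) = g * x - L * x" for x
    using arg_cong[OF r2, of "\<lambda>z. z * x"] by (simp add: algebra_simps)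
  define Y where "Y = 1 - g + L - L * d + L * d * g"
  have "(1 + g * d) * Y = 1" unfolding Y_def
    by (simp add: algebra_simps g gg r2 r2' Lg gL Lg' gL')
  moreover have "Y * (1 + g * d) = 1" unfolding Y_def
    by (simp add: algebra_simps g gg r1 r1' Lg gL Lg' gL')
  ultimately show ?thesis unfolding unit_def by blast
qed


lemma Tr_iff: "e \<in> Tr \<longleftrightarrow> e * e * e = e"
  by (simp add: Tr_def power3_eq_cube)

lemma trip_Delta_unit:
  assumes e: "e * e * e = (e::'a::ring_1)" and d: "d \<in> Delta"
  shows "unit (1 + e * d)"
proof -
  define g where "g = e * e"
  have gg: "g * g = g" unfolding g_def using e by (metis mult.assoc)
  define V where "V = 1 - g + e"
  have e1: "e * g = e" "g * e = e" unfolding g_def using e by (simp_all add: mult.assoc)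
  have "V * V = 1" unfolding V_def by (simp add: algebra_simps gg e1 g_def[symmetric])
  then have "unit V" unfolding unit_def by blast
  then have "V * d \<in> Delta" using Delta_lunit d by blast
  then have "unit (1 + g * (V * d))" using idem_Delta_unit gg by blast
  moreover have "g * (V * d) = e * d" unfolding V_def by (simp add: algebra_simps gg e1 mult.assoc[symmetric])
  ultimately show ?thesis by simp
qed

lemma DT_Delta_J:
  assumes DT: "DT_ring TYPE('a::ring_1)" and d: "(d::'a) \<in> Delta"
  shows "d \<in> jacobson"
proof (rule in_J_if)
  fix r :: 'a
  obtain e d' where ed: "e \<in> Tr" "d' \<in> Delta" "r = e + d'" using DT unfolding DT_ring_def by blast
  have "unit (1 + e * d)" using trip_Delta_unit ed d Tr_iff by blast
  moreover have "d' * d \<in> Delta" using Delta_mult ed d by blast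
  ultimately have "unit (d' * d + (1 + e * d))" using Delta_iff by blast
  moreover have "d' * d + (1 + e * d) = 1 + r * d" using ed by (simp add: algebra_simps)
  ultimately show "\<exists>y. y * (1 + r * d) = 1" unfolding unit_def by auto
qed

lemma DT_imp_semi: "DT_ring TYPE('a::ring_1) \<Longrightarrow> semi_tripotent TYPE('a)"
  unfolding semi_tripotent_def using DT_Delta_J unfolding DT_ring_def by blast

lemma semi_imp_DT: "semi_tripotent TYPE('a::ring_1) \<Longrightarrow> DT_ring TYPE('a)"
  unfolding DT_ring_def semi_tripotent_def using J_sub_Delta by blast

lemma semi_imp_3:
  assumes S: "semi_tripotent TYPE('a::ring_1)"
  shows "\<forall>a::'a. \<exists>e v j. e * e = e \<and> v * v = 1 \<and> e * v = v * e \<and> j \<in> jacobson \<and> a = e + v + j"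
proof
  fix a :: 'a
  obtain t j where tj: "t \<in> Tr" "j \<in> jacobson" "a - 1 = t + j" using S unfolding semi_tripotent_def by blast
  have t: "t * t * t = t" using tj Tr_iff by blast
  define g where "g = t * t"
  have gg: "g * g = g" unfolding g_def using t by (metis mult.assoc)
  have e1: "t * g = t" "g * t = t" unfolding g_def using t by (simp_all add: mult.assoc)
  define v where "v = t + 1 - g"
  have "v * v = 1" unfolding v_def by (simp add: algebra_simps gg e1 g_def[symmetric])
  moreover have "g * v = v * g" unfolding v_def by (simp add: algebra_simps gg e1 g_def[symmetric])
  moreover have "a = g + v + j" unfolding v_def using tj by (simp add: algebra_simps)
  ultimately show "\<exists>e v j. e * e = e \<and> v * v = 1 \<and> e * v = v * e \<and> j \<in> jacobson \<and> a = e + v + j"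
    using gg tj by blast
qed


definition jrel :: "'a::ring_1 \<Rightarrow> 'a \<Rightarrow> bool" where
  "jrel x y \<longleftrightarrow> x - y \<in> jacobson"

lemma jrel_refl: "jrel x (x::'a::ring_1)" unfolding jrel_def by (simp add: J_zero)
lemma jrel_sym: "jrel x y \<Longrightarrow> jrel y (x::'a::ring_1)"
proof -
  assume "jrel x y"
  then have "- (x - y) \<in> jacobson" unfolding jrel_def by (rule J_uminus)
  then show ?thesis unfolding jrel_def by simp
qed
lemma jrel_trans: "jrel x y \<Longrightarrow> jrel y z \<Longrightarrow> jrel x (z::'a::ring_1)"
proof -
  assume "jrel x y" "jrel y z"
  then have "(x - y) + (y - z) \<in> jacobson" unfolding jrel_def by (rule J_add)
  then show ?thesis unfolding jrel_def by simp
qed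
lemma equivp_jrel: "equivp (jrel :: 'a::ring_1 \<Rightarrow> 'a \<Rightarrow> bool)"
  by (rule equivpI) (auto intro: reflpI sympI transpI jrel_refl jrel_sym jrel_trans)

lemma one_notin_J: "(1::'a::ring_1) \<notin> jacobson"
proof
  assume "(1::'a) \<in> jacobson"
  then have "- 1 \<in> (jacobson::'a set)" by (rule J_uminus)
  then have "unit (1 + - 1 :: 'a)" by (rule J_unit)
  then show False unfolding unit_def by simp
qed

lemma not_jrel01: "\<not> jrel (0::'a::ring_1) 1"
proof
  assume "jrel (0::'a) 1"
  then have "unit (1 + (0 - 1) :: 'a)" unfolding jrel_def by (rule J_unit)
  then show False unfolding unit_def by simp
qed

quotient_type (overloaded) 'a jq = "'a::ring_1" / jrel
  by (rule equivp_jrel)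

instantiation jq :: (ring_1) ring_1
begin
lift_definition zero_jq :: "'a jq" is 0 .
lift_definition one_jq :: "'a jq" is 1 .
lift_definition plus_jq :: "'a jq \<Rightarrow> 'a jq \<Rightarrow> 'a jq" is "(+)"
proof -
  fix x x' y y' :: 'a
  assume "jrel x x'" "jrel y y'"
  then have "(x - x') + (y - y') \<in> jacobson" unfolding jrel_def by (rule J_add)
  then show "jrel (x + y) (x' + y')" unfolding jrel_def by (simp add: algebra_simps)
qed
lift_definition uminus_jq :: "'a jq \<Rightarrow> 'a jq" is uminus
proof -
  fix x x' :: 'a
  assume "jrel x x'"
  then have "- (x - x') \<in> jacobson" unfolding jrel_def by (rule J_uminus)
  then show "jrel (- x) (- x')" unfolding jrel_def by (simp add: algebra_simps)
qed
lift_definition minus_jq :: "'a jq \<Rightarrow> 'a jq \<Rightarrow> 'a jq" is "(-)"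
proof -
  fix x x' y y' :: 'a
  assume "jrel x x'" "jrel y y'"
  then have "(x - x') - (y - y') \<in> jacobson" unfolding jrel_def by (rule J_diff)
  then show "jrel (x - y) (x' - y')" unfolding jrel_def by (simp add: algebra_simps)
qed
lift_definition times_jq :: "'a jq \<Rightarrow> 'a jq \<Rightarrow> 'a jq" is "(*)"
proof -
  fix x x' y y' :: 'a
  assume "jrel x x'" "jrel y y'"
  then have "(x - x') * y \<in> jacobson" "x' * (y - y') \<in> jacobson"
    unfolding jrel_def using J_rmult J_lmult by blast+
  then have "(x - x') * y + x' * (y - y') \<in> jacobson" by (rule J_add)
  then show "jrel (x * y) (x' * y')" unfolding jrel_def by (simp add: algebra_simps)
qed
instance
proof
  fix a b c :: "'a jq"
  show "a + b + c = a + (b + c)" by transfer (simp add: jrel_def J_zero add.assoc)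
  show "a + b = b + a" by transfer (simp add: jrel_def J_zero add.commute)
  show "0 + a = a" by transfer (simp add: jrel_def J_zero)
  show "- a + a = 0" by transfer (simp add: jrel_def J_zero)
  show "a - b = a + - b" by transfer (simp add: jrel_def J_zero)
  show "a * b * c = a * (b * c)" by transfer (simp add: jrel_def J_zero mult.assoc)
  show "(a + b) * c = a * c + b * c" by transfer (simp add: jrel_def J_zero distrib_right)
  show "a * (b + c) = a * b + a * c" by transfer (simp add: jrel_def J_zero distrib_left)
  show "1 * a = a" by transfer (simp add: jrel_def J_zero)
  show "a * 1 = a" by transfer (simp add: jrel_def J_zero)
  show "(0::'a jq) \<noteq> 1" by transfer (rule not_jrel01)
qed
end


lemma pi_eq: "abs_jq x = abs_jq y \<longleftrightarrow> x - y \<in> jacobson"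
  using jq.abs_eq_iff jrel_def by metis
lemma pi_add: "abs_jq (x + y) = abs_jq x + abs_jq y" by (simp add: plus_jq.abs_eq)
lemma pi_mult: "abs_jq (x * y) = abs_jq x * abs_jq y" by (simp add: times_jq.abs_eq)
lemma pi_diff: "abs_jq (x - y) = abs_jq x - abs_jq y" by (simp add: minus_jq.abs_eq)
lemma pi_uminus: "abs_jq (- x) = - abs_jq x" by (simp add: uminus_jq.abs_eq)
lemma pi_one: "abs_jq 1 = 1" by (simp add: one_jq_def)
lemma pi_zero: "abs_jq 0 = 0" by (simp add: zero_jq_def)
lemma pi_numeral: "abs_jq (numeral k) = numeral k"
  by (induct k) (simp_all only: numeral.simps pi_add pi_one)
lemmas pi_hom = pi_add pi_mult pi_diff pi_uminus pi_one pi_zero pi_numeral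
lemma pi_surj: "\<exists>x. abs_jq x = s"
  by (induct s rule: jq.abs_induct) blast
lemma pi_zero_iff: "abs_jq x = 0 \<longleftrightarrow> x \<in> jacobson"
  using pi_eq[of x 0] by (simp add: pi_zero)

lemma unit_lift:
  assumes ab: "abs_jq a * abs_jq b = 1" and ba: "abs_jq b * abs_jq a = 1"
  shows "unit (a::'a::ring_1)"
proof -
  have "abs_jq (a * b) = abs_jq 1" using ab by (simp add: pi_hom)
  then have "a * b - 1 \<in> jacobson" using pi_eq by blast
  then have "unit (1 + (a * b - 1))" by (rule J_unit)
  then obtain w where w: "a * b * w = 1" unfolding unit_def by auto
  have "abs_jq (b * a) = abs_jq 1" using ba by (simp add: pi_hom)
  then have "b * a - 1 \<in> jacobson" using pi_eq by blast
  then have "unit (1 + (b * a - 1))" by (rule J_unit)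
  then obtain w' where w': "w' * (b * a) = 1" unfolding unit_def by auto
  have "w' * b = w' * b * (a * (b * w))" using w by (simp add: mult.assoc)
  also have "\<dots> = b * w" using w' by (simp add: mult.assoc[symmetric])
  finally have "(b * w) * a = 1" using w' by (metis mult.assoc)
  moreover have "a * (b * w) = 1" using w by (simp add: mult.assoc)
  ultimately show ?thesis unfolding unit_def by blast
qed

lemma three_imp_semi:
  assumes H: "\<forall>a::'a::ring_1. \<exists>e v j. e * e = e \<and> v * v = 1 \<and> e * v = v * e \<and> j \<in> jacobson \<and> a = e + v + j"
  shows "semi_tripotent TYPE('a)"
proof -
  have P1: "\<forall>s::'a jq. \<exists>e v. e*e = e \<and> v*v = 1 \<and> e*v = v*e \<and> s = e + v"
  proof
    fix s :: "'a jq"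
    obtain x where x: "abs_jq x = s" using pi_surj by blast
    obtain e v j where evj: "e * e = e" "v * v = 1" "e * v = v * e" "j \<in> jacobson" "x = e + v + j"
      using H by blast
    have "abs_jq j = 0" using evj(4) pi_zero_iff by blast
    then have "s = abs_jq e + abs_jq v" using x evj(5) by (simp add: pi_hom)
    moreover have "abs_jq e * abs_jq e = abs_jq e" "abs_jq v * abs_jq v = 1" "abs_jq e * abs_jq v = abs_jq v * abs_jq e"
      using evj by (simp_all add: pi_hom[symmetric])
    ultimately show "\<exists>e v. e*e = e \<and> v*v = 1 \<and> e*v = v*e \<and> s = e + v" by blast
  qed
  have R2: "\<forall>w::'a jq. w + w = 0 \<longrightarrow> w * w = 0 \<longrightarrow> w = 0"
  proof (intro allI impI)
    fix w :: "'a jq" assume w2: "w + w = 0" and ww: "w * w = 0"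
    obtain x where x: "abs_jq x = w" using pi_surj by blast
    have "x \<in> jacobson"
    proof (rule in_J_if)
      fix r :: 'a
      have o: "(abs_jq r * w) * (abs_jq r * w) = 0" using omega[OF P1 ww w2] .
      have "abs_jq (1 + r * x) * abs_jq (1 - r * x) = 1 - (abs_jq r * w) * (abs_jq r * w)"
        using x by (simp add: pi_hom algebra_simps)
      then have a1: "abs_jq (1 + r * x) * abs_jq (1 - r * x) = 1" using o by simp
      have "abs_jq (1 - r * x) * abs_jq (1 + r * x) = 1 - (abs_jq r * w) * (abs_jq r * w)"
        using x by (simp add: pi_hom algebra_simps)
      then have a2: "abs_jq (1 - r * x) * abs_jq (1 + r * x) = 1" using o by simp
      have "unit (1 + r * x)" using unit_lift[OF a1 a2] .
      then show "\<exists>y. y * (1 + r * x) = 1" unfolding unit_def by blast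
    qed
    then show "w = 0" using x pi_zero_iff by blast
  qed
  have six: "(6::'a jq) = 0" using six_zero[OF P1 R2] .
  have lift: "\<exists>P. P * P = P \<and> abs_jq P = abs_jq x" if xx: "abs_jq x * abs_jq x = abs_jq x" for x :: 'a
  proof -
    obtain e v j where evj: "e * e = e" "v * v = 1" "e * v = v * e" "j \<in> jacobson" "x = e + v + j"
      using H by blast
    have "abs_jq j = 0" using evj(4) pi_zero_iff by blast
    then have s: "abs_jq x = abs_jq e + abs_jq v" using evj(5) by (simp add: pi_hom)
    have "abs_jq e * abs_jq e = abs_jq e" "abs_jq v * abs_jq v = 1" "abs_jq e * abs_jq v = abs_jq v * abs_jq e"
      using evj by (simp_all add: pi_hom[symmetric])
    then have ee: "abs_jq e = 1 - abs_jq x" using idem_ev[OF xx _ _ _ s] by blast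
    have "(1 - e) * (1 - e) = 1 - e" using evj(1) by (simp add: algebra_simps)
    moreover have "abs_jq (1 - e) = abs_jq x" using ee by (simp add: pi_hom)
    ultimately show ?thesis by blast
  qed
  show ?thesis unfolding semi_tripotent_def
  proof
    fix a :: 'a
    define p where "p = 2 * a + 5 * (a * a)"
    define q where "q = a + 5 * (a * a)"
    have c: "abs_jq a * abs_jq a * abs_jq a = abs_jq a" using cube[OF P1 R2] .
    have t: "3 * (abs_jq a * abs_jq a + abs_jq a) = 0" using three_sq[OF P1 R2] .
    note fa = final_alg[OF six c t]
    have pp: "abs_jq p = 2 * abs_jq a + 5 * (abs_jq a * abs_jq a)" unfolding p_def by (simp add: pi_hom)
    have qq: "abs_jq q = abs_jq a + 5 * (abs_jq a * abs_jq a)" unfolding q_def by (simp add: pi_hom)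
    obtain P where P: "P * P = P" "abs_jq P = abs_jq p" using lift[of p] fa(1) pp by auto
    obtain F where F: "F * F = F" "abs_jq F = abs_jq q" using lift[of q] fa(2) qq by auto
    have "abs_jq (P * F) = 0" using fa(3) P F pp qq by (simp add: pi_hom)
    then have "- (P * F) \<in> jacobson" using pi_zero_iff J_uminus by blast
    then have "unit (1 + - (P * F))" by (rule J_unit)
    then obtain ui where ui: "(1 - P * F) * ui = 1" "ui * (1 - P * F) = 1" unfolding unit_def by auto
    define u where "u = 1 - P * F"
    define G where "G = u * F * ui"
    define Q where "Q = G * (1 - P)"
    have GG: "G * G = G"
    proof -
      have "G * G = u * F * (ui * u) * F * ui" unfolding G_def by (simp add: mult.assoc)
      also have "\<dots> = G" using ui F(1) unfolding u_def G_def by (simp add: mult.assoc)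
      finally show ?thesis .
    qed
    have PG: "P * G = 0"
    proof -
      have "P * u * F = 0" unfolding u_def using P(1) F(1) by (simp add: algebra_simps mult.assoc[symmetric])
      then show ?thesis unfolding G_def by (simp add: mult.assoc[symmetric])
    qed
    have PG': "P * (G * x) = 0" for x using PG by (metis mult.assoc mult_zero_left)
    have QQ: "Q * Q = Q" unfolding Q_def
    proof -
      have "G * (1 - P) * (G * (1 - P)) = G * (G - P * G) * (1 - P)" by (simp add: algebra_simps)
      then show "G * (1 - P) * (G * (1 - P)) = G * (1 - P)" using PG GG by simp
    qed
    have PQ: "P * Q = 0" unfolding Q_def using PG by (simp add: mult.assoc[symmetric])
    have QP: "Q * P = 0" unfolding Q_def using P(1) by (simp add: algebra_simps mult.assoc)
    define tt where "tt = P - Q"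
    have "tt * tt = P + Q" unfolding tt_def using P(1) QQ PQ QP by (simp add: algebra_simps)
    then have "tt * tt * tt = tt" unfolding tt_def using P(1) QQ PQ QP by (simp add: algebra_simps)
    then have ttT: "tt \<in> Tr" by (simp add: Tr_def power3_eq_cube)
    have u1: "abs_jq u = 1" unfolding u_def using fa(3) P F pp qq by (simp add: pi_hom)
    have ui1: "abs_jq ui = 1"
    proof -
      have "abs_jq u * abs_jq ui = 1" using ui unfolding u_def[symmetric] by (simp add: pi_hom[symmetric])
      then show ?thesis using u1 by simp
    qed
    have "abs_jq Q = abs_jq q * (1 - abs_jq p)" unfolding Q_def G_def using u1 ui1 F P by (simp add: pi_hom)
    also have "\<dots> = abs_jq q" using fa(4) pp qq by (simp add: algebra_simps)
    finally have QQq: "abs_jq Q = abs_jq q" .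
    have "abs_jq (a - tt) = abs_jq a - (abs_jq p - abs_jq q)" unfolding tt_def using P QQq by (simp add: pi_hom)
    also have "\<dots> = 0" using fa(5) pp qq by simp
    finally have "a - tt \<in> jacobson" using pi_zero_iff by blast
    moreover have "a = tt + (a - tt)" by simp
    ultimately show "\<exists>e\<in>Tr. \<exists>j\<in>jacobson. a = e + j" using ttT by blast
  qed
qed


theorem theorem4p13:
  shows "(DT_ring TYPE('a::ring_1) \<longleftrightarrow> semi_tripotent TYPE('a)) \<and>
         (semi_tripotent TYPE('a) \<longleftrightarrow>
           (\<forall>a::'a. \<exists>e v j. e * e = e \<and> v * v = 1 \<and> e * v = v * e \<and>
              j \<in> jacobson \<and> a = e + v + j))"
  using DT_imp_semi semi_imp_DT semi_imp_3 three_imp_semi by blast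

end
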